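(* Let $I=(N,O,\succsim)$ be a general instance, $p$ a generalized random matching and $p'$ its associated random matching for the associated instance $I'$. Then $p$ is robust ex-post weakly stable if and only if $p'$ is robust ex-post weakly stable and $p$ is non-wasteful (i.e., $p'$ respects non-wastefulness).
   Context: General instance: $N=\{1,\dots,n\}$ agents, $O=\{o_1,\dots,o_m\}$ objects ($m,n\ge1$ arbitrary), $\emptyset$ the null object; each agent $i$ has a weak order $\succsim_i$ over $O\cup\{\emptyset\}$, each object $o$ a weak order $\succsim_o$ over $N\cup\{\emptyset\}$, with either $o\succ_i\emptyset$ or $\emptyset\succ_i o$, and either $i\succ_o\emptyset$ or $\emptyset\succ_o i$. $(i,o)$ is acceptable if $o\succ_i\emptyset$ and $i\succ_o\emptyset$. A generalized random matching is an $n\times m$ nonnegative matrix with row and column sums $\le1$; deterministic if entries are in $\{0,1\}$. $p$ is individually rational if $p(i,o)=0$ whenever $\emptyset\succ_i o$ or $\emptyset\succ_o i$; non-wasteful if there is no acceptable $(i,o)$ with $\sum_{o':o'\succsim_i o}p(i,o')<1$ and $\sum_j p(j,o)<1$. A generalized deterministic matching is weakly stable if it is individually rational and there is no acceptable $(i,o)$ with $\sum_{o':o'\succsim_i o}p(i,o')=0$ and $\sum_{j:j\succsim_o i}p(j,o)=0$. A decomposition of $p$ is $p=\sum_j\lambda_jP_j$ with $P_j$ generalized deterministic matchings, $\lambda_j\in(0,1]$, $\sum\lambda_j=1$. $p$ is robust ex-post weakly stable if it is non-wasteful and every decomposition of $p$ consists only of weakly stable generalized deterministic matchings. Associated instance: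 $D=\{d_1,\dots,d_m\}$, $\Phi=\{\phi_1,\dots,\phi_n\}$, $N'=N\cup D$, $O'=O\cup\Phi$, with weak orders (blocks best to worst, consecutive blocks strict): $i\in N$: objects acceptable to $i$ by $\succsim_i$, $\phi_i$, $\phi_k$ ($k\ne i$) in increasing index, objects unacceptable to $i$ by $\succsim_i$; $o_j$: agents acceptable to $o_j$ by $\succsim_{o_j}$, $d_j$, $d_k$ ($k\ne j$) in increasing index, agents unacceptable to $o_j$ by $\succsim_{o_j}$; $d_j$: $o_j$, other objects of $O$ in increasing index, then null objects with $\phi_k\succsim'_{d_j}\phi_l$ iff $k\succsim_{o_j}l$; $\phi_i$: $i$, other agents of $N$ in increasing index, then dummies with $d_k\succsim'_{\phi_i}d_l$ iff $o_k\succsim_i o_l$. Associated random matching: $p'(i,o_j)=p(i,o_j)$, $p'(d_j,\phi_i)=p(i,o_j)$, $p'(i,\phi_i)=1-\sum_o p(i,o)$, $p'(d_j,o_j)=1-\sum_i p(i,o_j)$, other entries $0$. For $I'$: a deterministic matching $q$ (bistochastic $\{0,1\}$-matrix) is weakly stable if there are no $a,b\in N'$, $c,c'\in O'$ with $q(a,c')=1$, $q(b,c)=1$, $c\succ'_a c'$, $a\succ'_c b$; a random matching (bistochastic matrix) is robust ex-post weakly stable if every representation of it as a convex combination with positive weights of deterministic matchings uses only weakly stable ones. *)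

theory Defs
  imports Complex_Main
begin

(* Agents of N are 0..<n, objects of O are 0..<m (index order preserved).
   The null object / null agent is None. pA i x y means x \<succeq>_i y (x,y :: nat option),
   pO j x y means x \<succeq>_{o_j} y. *)

definition sp :: "('a \<Rightarrow> 'a \<Rightarrow> bool) \<Rightarrow> 'a \<Rightarrow> 'a \<Rightarrow> bool" where
  "sp R x y \<longleftrightarrow> R x y \<and> \<not> R y x"

definition weak_order_on :: "'a set \<Rightarrow> ('a \<Rightarrow> 'a \<Rightarrow> bool) \<Rightarrow> bool" where
  "weak_order_on A R \<longleftrightarrow> (\<forall>x\<in>A. \<forall>y\<in>A. R x y \<or> R y x) \<and>
     (\<forall>x\<in>A. \<forall>y\<in>A. \<forall>z\<in>A. R x y \<longrightarrow> R y z \<longrightarrow> R x z)"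

definition general_instance ::
  "nat \<Rightarrow> nat \<Rightarrow> (nat \<Rightarrow> nat option \<Rightarrow> nat option \<Rightarrow> bool)
       \<Rightarrow> (nat \<Rightarrow> nat option \<Rightarrow> nat option \<Rightarrow> bool) \<Rightarrow> bool" where
  "general_instance n m pA pO \<longleftrightarrow> n \<ge> 1 \<and> m \<ge> 1 \<and>
     (\<forall>i<n. weak_order_on (insert None (Some ` {..<m})) (pA i) \<and>
        (\<forall>j<m. sp (pA i) (Some j) None \<or> sp (pA i) None (Some j))) \<and>
     (\<forall>j<m. weak_order_on (insert None (Some ` {..<n})) (pO j) \<and>
        (\<forall>i<n. sp (pO j) (Some i) None \<or> sp (pO j) None (Some i)))"

definition acceptable where
  "acceptable pA pO i j \<longleftrightarrow> sp (pA i) (Some j) None \<and> sp (pO j) (Some i) None"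

definition gen_random_matching :: "nat \<Rightarrow> nat \<Rightarrow> (nat \<Rightarrow> nat \<Rightarrow> real) \<Rightarrow> bool" where
  "gen_random_matching n m p \<longleftrightarrow>
     (\<forall>i<n. \<forall>j<m. p i j \<ge> 0) \<and>
     (\<forall>i<n. (\<Sum>j<m. p i j) \<le> 1) \<and>
     (\<forall>j<m. (\<Sum>i<n. p i j) \<le> 1)"

definition gen_deterministic :: "nat \<Rightarrow> nat \<Rightarrow> (nat \<Rightarrow> nat \<Rightarrow> real) \<Rightarrow> bool" where
  "gen_deterministic n m P \<longleftrightarrow> gen_random_matching n m P \<and>
     (\<forall>i<n. \<forall>j<m. P i j \<in> {0, 1})"

definition individually_rational where
  "individually_rational n m pA pO p \<longleftrightarrow>
     (\<forall>i<n. \<forall>j<m. (sp (pA i) None (Some j) \<or> sp (pO j) None (Some i)) \<longrightarrow> p i j = 0)"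

definition non_wasteful where
  "non_wasteful n m pA pO p \<longleftrightarrow>
     \<not> (\<exists>i<n. \<exists>j<m. acceptable pA pO i j \<and>
          (\<Sum>j' | j' < m \<and> pA i (Some j') (Some j). p i j') < 1 \<and>
          (\<Sum>i'<n. p i' j) < 1)"

definition gen_weakly_stable where
  "gen_weakly_stable n m pA pO P \<longleftrightarrow> individually_rational n m pA pO P \<and>
     \<not> (\<exists>i<n. \<exists>j<m. acceptable pA pO i j \<and>
          (\<Sum>j' | j' < m \<and> pA i (Some j') (Some j). P i j') = 0 \<and>
          (\<Sum>i' | i' < n \<and> pO j (Some i') (Some i). P i' j) = 0)"

definition gen_decomposition ::
  "nat \<Rightarrow> nat \<Rightarrow> (nat \<Rightarrow> nat \<Rightarrow> real) \<Rightarrow> nat \<Rightarrow> (nat \<Rightarrow> real)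
     \<Rightarrow> (nat \<Rightarrow> nat \<Rightarrow> nat \<Rightarrow> real) \<Rightarrow> bool" where
  "gen_decomposition n m p K lam Q \<longleftrightarrow>
     (\<forall>k<K. 0 < lam k \<and> lam k \<le> 1 \<and> gen_deterministic n m (Q k)) \<and>
     (\<Sum>k<K. lam k) = 1 \<and>
     (\<forall>i<n. \<forall>j<m. p i j = (\<Sum>k<K. lam k * Q k i j))"

definition gen_robust_ex_post_ws where
  "gen_robust_ex_post_ws n m pA pO p \<longleftrightarrow> non_wasteful n m pA pO p \<and>
     (\<forall>K lam Q. gen_decomposition n m p K lam Q \<longrightarrow>
        (\<forall>k<K. gen_weakly_stable n m pA pO (Q k)))"

(* Agents of N': Inl i = agent i (i<n), Inr j = dummy d_j (j<m).
   Objects of O': Inl j = object o_j (j<m), Inr i = null object phi_i (i<n). *)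

definition agents' :: "nat \<Rightarrow> nat \<Rightarrow> (nat + nat) set" where
  "agents' n m = Inl ` {..<n} \<union> Inr ` {..<m}"

definition objects' :: "nat \<Rightarrow> nat \<Rightarrow> (nat + nat) set" where
  "objects' n m = Inl ` {..<m} \<union> Inr ` {..<n}"

definition rank_rel :: "('a \<Rightarrow> nat) \<Rightarrow> ('a \<Rightarrow> 'a \<Rightarrow> bool) \<Rightarrow> 'a \<Rightarrow> 'a \<Rightarrow> bool" where
  "rank_rel rk tie x y \<longleftrightarrow> rk x < rk y \<or> (rk x = rk y \<and> tie x y)"

(* assocA n m pA pO a c c' : c \<succeq>'_a c' *)
definition assocA ::
  "nat \<Rightarrow> nat \<Rightarrow> (nat \<Rightarrow> nat option \<Rightarrow> nat option \<Rightarrow> bool)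
     \<Rightarrow> (nat \<Rightarrow> nat option \<Rightarrow> nat option \<Rightarrow> bool)
     \<Rightarrow> nat + nat \<Rightarrow> nat + nat \<Rightarrow> nat + nat \<Rightarrow> bool" where
  "assocA n m pA pO a = (case a of
      Inl i \<Rightarrow> rank_rel
        (\<lambda>c. case c of Inl j \<Rightarrow> (if sp (pA i) (Some j) None then 0 else n + 2)
                     | Inr k \<Rightarrow> (if k = i then 1 else k + 2))
        (\<lambda>c c'. case (c, c') of (Inl j, Inl j') \<Rightarrow> pA i (Some j) (Some j') | _ \<Rightarrow> True)
    | Inr j \<Rightarrow> rank_rel
        (\<lambda>c. case c of Inl j' \<Rightarrow> (if j' = j then 0 else j' + 1)
                     | Inr k \<Rightarrow> m + 1)
        (\<lambda>c c'. case (c, c') of (Inr k, Inr l) \<Rightarrow> pO j (Some k) (Some l) | _ \<Rightarrow> True))"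

(* assocO n m pA pO c a a' : a \<succeq>'_c a' *)
definition assocO ::
  "nat \<Rightarrow> nat \<Rightarrow> (nat \<Rightarrow> nat option \<Rightarrow> nat option \<Rightarrow> bool)
     \<Rightarrow> (nat \<Rightarrow> nat option \<Rightarrow> nat option \<Rightarrow> bool)
     \<Rightarrow> nat + nat \<Rightarrow> nat + nat \<Rightarrow> nat + nat \<Rightarrow> bool" where
  "assocO n m pA pO c = (case c of
      Inl j \<Rightarrow> rank_rel
        (\<lambda>a. case a of Inl i \<Rightarrow> (if sp (pO j) (Some i) None then 0 else m + 2)
                     | Inr k \<Rightarrow> (if k = j then 1 else k + 2))
        (\<lambda>a a'. case (a, a') of (Inl i, Inl i') \<Rightarrow> pO j (Some i) (Some i') | _ \<Rightarrow> True)
    | Inr i \<Rightarrow> rank_rel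
        (\<lambda>a. case a of Inl i' \<Rightarrow> (if i' = i then 0 else i' + 1)
                     | Inr k \<Rightarrow> n + 1)
        (\<lambda>a a'. case (a, a') of (Inr k, Inr l) \<Rightarrow> pA i (Some k) (Some l) | _ \<Rightarrow> True))"

definition assoc_matching :: "nat \<Rightarrow> nat \<Rightarrow> (nat \<Rightarrow> nat \<Rightarrow> real) \<Rightarrow> nat + nat \<Rightarrow> nat + nat \<Rightarrow> real" where
  "assoc_matching n m p a c = (case (a, c) of
      (Inl i, Inl j) \<Rightarrow> p i j
    | (Inr j, Inr i) \<Rightarrow> p i j
    | (Inl i, Inr k) \<Rightarrow> (if k = i then 1 - (\<Sum>j<m. p i j) else 0)
    | (Inr j, Inl k) \<Rightarrow> (if k = j then 1 - (\<Sum>i<n. p i j) else 0))"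

definition bistochastic :: "'a set \<Rightarrow> 'b set \<Rightarrow> ('a \<Rightarrow> 'b \<Rightarrow> real) \<Rightarrow> bool" where
  "bistochastic A B q \<longleftrightarrow> (\<forall>a\<in>A. \<forall>c\<in>B. q a c \<ge> 0) \<and>
     (\<forall>a\<in>A. (\<Sum>c\<in>B. q a c) = 1) \<and> (\<forall>c\<in>B. (\<Sum>a\<in>A. q a c) = 1)"

definition deterministic_matching :: "'a set \<Rightarrow> 'b set \<Rightarrow> ('a \<Rightarrow> 'b \<Rightarrow> real) \<Rightarrow> bool" where
  "deterministic_matching A B q \<longleftrightarrow> bistochastic A B q \<and> (\<forall>a\<in>A. \<forall>c\<in>B. q a c \<in> {0, 1})"

definition weakly_stable :: "'a set \<Rightarrow> 'b set \<Rightarrow> ('a \<Rightarrow> 'b \<Rightarrow> 'b \<Rightarrow> bool)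
     \<Rightarrow> ('b \<Rightarrow> 'a \<Rightarrow> 'a \<Rightarrow> bool) \<Rightarrow> ('a \<Rightarrow> 'b \<Rightarrow> real) \<Rightarrow> bool" where
  "weakly_stable A B RA RO q \<longleftrightarrow>
     \<not> (\<exists>a\<in>A. \<exists>b\<in>A. \<exists>c\<in>B. \<exists>c'\<in>B. q a c' = 1 \<and> q b c = 1 \<and>
            sp (RA a) c c' \<and> sp (RO c) a b)"

definition robust_ex_post_ws :: "'a set \<Rightarrow> 'b set \<Rightarrow> ('a \<Rightarrow> 'b \<Rightarrow> 'b \<Rightarrow> bool)
     \<Rightarrow> ('b \<Rightarrow> 'a \<Rightarrow> 'a \<Rightarrow> bool) \<Rightarrow> ('a \<Rightarrow> 'b \<Rightarrow> real) \<Rightarrow> bool" where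
  "robust_ex_post_ws A B RA RO q \<longleftrightarrow>
     (\<forall>K (lam :: nat \<Rightarrow> real) Q.
        ((\<forall>k<K. 0 < lam k \<and> deterministic_matching A B (Q k)) \<and>
         (\<Sum>k<K. lam k) = 1 \<and>
         (\<forall>a\<in>A. \<forall>c\<in>B. q a c = (\<Sum>k<K. lam k * Q k a c)))
        \<longrightarrow> (\<forall>k<K. weakly_stable A B RA RO (Q k)))"

end

theory Submission
  imports Defs
begin

lemma sum_objects': "sum g (objects' n m) = (\<Sum>j<m. g (Inl j)) + (\<Sum>k<n. g (Inr k))"
  unfolding objects'_def by (subst sum.union_disjoint) (auto simp: sum.reindex)

lemma sum_agents': "sum g (agents' n m) = (\<Sum>i<n. g (Inl i)) + (\<Sum>k<m. g (Inr k))"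
  unfolding agents'_def by (subst sum.union_disjoint) (auto simp: sum.reindex)

lemma fin_obj: "finite (objects' n m)" unfolding objects'_def by auto
lemma fin_ag: "finite (agents' n m)" unfolding agents'_def by auto

lemma sum01:
  assumes "finite S" "\<forall>x\<in>S. f x \<in> {0,1::real}" "sum f S \<le> 1"
  shows "sum f S = 0 \<or> sum f S = 1"
proof (cases "\<exists>x\<in>S. f x = 1")
  case True
  then obtain x where x: "x \<in> S" "f x = 1" by blast
  have "f x \<le> sum f S" using assms(1,2) x by (intro member_le_sum) auto
  then show ?thesis using assms x by auto
next
  case False
  then have "\<forall>x\<in>S. f x = 0" using assms(2) by auto
  then show ?thesis by simp
qed

lemma row_unique:
  assumes "bistochastic A B q" "finite B" "a \<in> A" "c \<in> B" "c2 \<in> B" "c2 \<noteq> c" "q a c = 1"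
  shows "q a c2 = 0"
proof -
  have "sum (q a) {c, c2} \<le> sum (q a) B"
    using assms by (intro sum_mono2) (auto simp: bistochastic_def)
  then have "q a c + q a c2 \<le> 1" using assms by (auto simp: bistochastic_def)
  then show ?thesis using assms by (auto simp: bistochastic_def) (smt (verit))
qed

lemma col_unique:
  assumes "bistochastic A B q" "finite A" "a \<in> A" "c \<in> B" "a2 \<in> A" "a2 \<noteq> a" "q a c = 1"
  shows "q a2 c = 0"
proof -
  have "sum (\<lambda>x. q x c) {a, a2} \<le> sum (\<lambda>x. q x c) A"
    using assms by (intro sum_mono2) (auto simp: bistochastic_def)
  then have "q a c + q a2 c \<le> 1" using assms by (auto simp: bistochastic_def)
  then show ?thesis using assms by (auto simp: bistochastic_def) (smt (verit))
qed


lemma gi_facts: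
  assumes "general_instance n m pA pO"
  shows "\<And>i x y. i<n \<Longrightarrow> x \<in> insert None (Some ` {..<m}) \<Longrightarrow> y \<in> insert None (Some ` {..<m}) \<Longrightarrow> pA i x y \<or> pA i y x"
    and "\<And>i x y z. i<n \<Longrightarrow> x \<in> insert None (Some ` {..<m}) \<Longrightarrow> y \<in> insert None (Some ` {..<m}) \<Longrightarrow> z \<in> insert None (Some ` {..<m}) \<Longrightarrow> pA i x y \<Longrightarrow> pA i y z \<Longrightarrow> pA i x z"
    and "\<And>i j. i<n \<Longrightarrow> j<m \<Longrightarrow> sp (pA i) (Some j) None \<or> sp (pA i) None (Some j)"
    and "\<And>j x y. j<m \<Longrightarrow> x \<in> insert None (Some ` {..<n}) \<Longrightarrow> y \<in> insert None (Some ` {..<n}) \<Longrightarrow> pO j x y \<or> pO j y x"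
    and "\<And>j x y z. j<m \<Longrightarrow> x \<in> insert None (Some ` {..<n}) \<Longrightarrow> y \<in> insert None (Some ` {..<n}) \<Longrightarrow> z \<in> insert None (Some ` {..<n}) \<Longrightarrow> pO j x y \<Longrightarrow> pO j y z \<Longrightarrow> pO j x z"
    and "\<And>i j. i<n \<Longrightarrow> j<m \<Longrightarrow> sp (pO j) (Some i) None \<or> sp (pO j) None (Some i)"
  using assms unfolding general_instance_def weak_order_on_def by blast+

lemma ws_back:
  assumes gi: "general_instance n m pA pO" and det: "gen_deterministic n m P"
    and ws: "weakly_stable (agents' n m) (objects' n m) (assocA n m pA pO) (assocO n m pA pO) (assoc_matching n m P)"
  shows "gen_weakly_stable n m pA pO P"
proof -
  let ?q = "assoc_matching n m P"
  have nb: "\<not> (?q a c' = 1 \<and> ?q b c = 1 \<and> sp (assocA n m pA pO a) c c' \<and> sp (assocO n m pA pO c) a b)"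
    if "a \<in> agents' n m" "b \<in> agents' n m" "c \<in> objects' n m" "c' \<in> objects' n m" for a b c c'
    using ws that unfolding weakly_stable_def by blast
  have n1: "n \<ge> 1" "m \<ge> 1" using gi unfolding general_instance_def by auto
  have P01: "P i j \<in> {0,1}" if "i<n" "j<m" for i j using det that unfolding gen_deterministic_def by auto
  have IR: "individually_rational n m pA pO P"
    unfolding individually_rational_def
  proof (intro allI impI)
    fix i j assume i: "i<n" and j: "j<m" and h: "sp (pA i) None (Some j) \<or> sp (pO j) None (Some i)"
    show "P i j = 0"
    proof (rule ccontr)
      assume "P i j \<noteq> 0" then have P1: "P i j = 1" using P01[OF i j] by auto
      from h show False
      proof
        assume h1: "sp (pA i) None (Some j)"
        have "\<not> sp (pA i) (Some j) None" using h1 unfolding sp_def by auto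
        then show False using nb[of "Inl i" "Inr j" "Inr i" "Inl j"] i j P1
          by (auto simp add: agents'_def objects'_def assoc_matching_def assocA_def assocO_def rank_rel_def sp_def split: if_splits)
      next
        assume h1: "sp (pO j) None (Some i)"
        have "\<not> sp (pO j) (Some i) None" using h1 unfolding sp_def by auto
        then show False using nb[of "Inr j" "Inl i" "Inl j" "Inr i"] i j P1
          by (auto simp add: agents'_def objects'_def assoc_matching_def assocA_def assocO_def rank_rel_def sp_def split: if_splits)
      qed
    qed
  qed
  show ?thesis unfolding gen_weakly_stable_def
  proof (intro conjI IR notI)
    assume "\<exists>i<n. \<exists>j<m. acceptable pA pO i j \<and>
          (\<Sum>j' | j' < m \<and> pA i (Some j') (Some j). P i j') = 0 \<and>
          (\<Sum>i' | i' < n \<and> pO j (Some i') (Some i). P i' j) = 0"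
    then obtain i j where i: "i<n" and j: "j<m" and acc: "acceptable pA pO i j"
      and S1: "(\<Sum>j' | j' < m \<and> pA i (Some j') (Some j). P i j') = 0"
      and S2: "(\<Sum>i' | i' < n \<and> pO j (Some i') (Some i). P i' j) = 0" by blast
    have nn: "P i' j' \<ge> 0" if "i'<n" "j'<m" for i' j' using P01[OF that] by auto
    have Z1: "P i j' = 0" if "j'<m" "pA i (Some j') (Some j)" for j'
      using S1 that nn[OF i] by (subst (asm) sum_nonneg_eq_0_iff) auto
    have Z2: "P i' j = 0" if "i'<n" "pO j (Some i') (Some i)" for i'
      using S2 that nn[OF _ j] by (subst (asm) sum_nonneg_eq_0_iff) auto
    have ai: "sp (pA i) (Some j) None" and aj: "sp (pO j) (Some i) None"
      using acc unfolding acceptable_def by auto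
    obtain c' where c': "c' \<in> objects' n m" "?q (Inl i) c' = 1" "sp (assocA n m pA pO (Inl i)) (Inl j) c'"
    proof (cases "\<exists>j'<m. P i j' = 1")
      case True
      then obtain j' where j': "j'<m" "P i j' = 1" by blast
      have nj: "\<not> pA i (Some j') (Some j)" using Z1 j' by force
      have tj: "pA i (Some j) (Some j')" using gi_facts(1)[OF gi i, of "Some j" "Some j'"] nj j j' by auto
      show ?thesis
        apply (rule that[of "Inl j'"])
        using j' nj tj ai by (auto simp: objects'_def assoc_matching_def assocA_def rank_rel_def sp_def)
    next
      case False
      then have "\<forall>j'<m. P i j' = 0" using P01[OF i] by auto
      then have "(\<Sum>j'<m. P i j') = 0" by simp
      then show ?thesis
        apply (intro that[of "Inr i"])
        using i ai by (auto simp: objects'_def assoc_matching_def assocA_def rank_rel_def sp_def)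
    qed
    obtain b where b: "b \<in> agents' n m" "?q b (Inl j) = 1" "sp (assocO n m pA pO (Inl j)) (Inl i) b"
    proof (cases "\<exists>i'<n. P i' j = 1")
      case True
      then obtain i' where i': "i'<n" "P i' j = 1" by blast
      have ni: "\<not> pO j (Some i') (Some i)" using Z2 i' by force
      have ti: "pO j (Some i) (Some i')" using gi_facts(4)[OF gi j, of "Some i" "Some i'"] ni i i' by auto
      show ?thesis
        apply (rule that[of "Inl i'"])
        using i' ni ti aj by (auto simp: agents'_def assoc_matching_def assocO_def rank_rel_def sp_def)
    next
      case False
      then have "\<forall>i'<n. P i' j = 0" using P01[OF _ j] by auto
      then have "(\<Sum>i'<n. P i' j) = 0" by simp
      then show ?thesis
        apply (intro that[of "Inr j"])
        using j aj by (auto simp: agents'_def assoc_matching_def assocO_def rank_rel_def sp_def)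
    qed
    have "Inl i \<in> agents' n m" "Inl j \<in> objects' n m" using i j by (auto simp: agents'_def objects'_def)
    then show False using nb[of "Inl i" b "Inl j" c'] b c' by blast
  qed
qed


lemma ext_det:
  assumes det: "gen_deterministic n m P"
  shows "deterministic_matching (agents' n m) (objects' n m) (assoc_matching n m P)"
proof -
  have P01: "P i j \<in> {0,1}" if "i<n" "j<m" for i j using det that unfolding gen_deterministic_def by auto
  have rs: "(\<Sum>j<m. P i j) = 0 \<or> (\<Sum>j<m. P i j) = 1" if "i<n" for i
    using det that P01 by (intro sum01) (auto simp: gen_deterministic_def gen_random_matching_def)
  have cs: "(\<Sum>i<n. P i j) = 0 \<or> (\<Sum>i<n. P i j) = 1" if "j<m" for j
    using det that P01 by (intro sum01) (auto simp: gen_deterministic_def gen_random_matching_def)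
  have rs1: "(\<Sum>j<m. P i j) \<le> 1" if "i<n" for i using det that by (auto simp: gen_deterministic_def gen_random_matching_def)
  have cs1: "(\<Sum>i<n. P i j) \<le> 1" if "j<m" for j using det that by (auto simp: gen_deterministic_def gen_random_matching_def)
  have nn: "P i j \<ge> 0" if "i<n" "j<m" for i j using P01[OF that] by auto
  have e: "assoc_matching n m P a c \<in> {0,1}" if "a \<in> agents' n m" "c \<in> objects' n m" for a c
    using that P01 rs cs by (auto simp: agents'_def objects'_def assoc_matching_def; meson)
  have r: "(\<Sum>c\<in>objects' n m. assoc_matching n m P a c) = 1" if "a \<in> agents' n m" for a
  proof -
    from that consider (L) i where "a = Inl i" "i<n" | (R) j where "a = Inr j" "j<m" by (auto simp: agents'_def)
    then show ?thesis
    proof cases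
      case L
      have "(\<Sum>k<n. assoc_matching n m P (Inl i) (Inr k)) = (\<Sum>k<n. if k = i then 1 - (\<Sum>j<m. P i j) else 0)"
        by (simp add: assoc_matching_def)
      also have "\<dots> = 1 - (\<Sum>j<m. P i j)" using L by (simp add: sum.delta)
      finally show ?thesis using L by (simp add: sum_objects' assoc_matching_def)
    next
      case R
      have "(\<Sum>k<m. assoc_matching n m P (Inr j) (Inl k)) = (\<Sum>k<m. if k = j then 1 - (\<Sum>i<n. P i j) else 0)"
        by (simp add: assoc_matching_def)
      also have "\<dots> = 1 - (\<Sum>i<n. P i j)" using R by (simp add: sum.delta)
      finally show ?thesis using R by (simp add: sum_objects' assoc_matching_def)
    qed
  qed
  have c: "(\<Sum>a\<in>agents' n m. assoc_matching n m P a c) = 1" if "c \<in> objects' n m" for c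
  proof -
    from that consider (L) j where "c = Inl j" "j<m" | (R) i where "c = Inr i" "i<n" by (auto simp: objects'_def)
    then show ?thesis
    proof cases
      case L
      have "(\<Sum>k<m. assoc_matching n m P (Inr k) (Inl j)) = (\<Sum>k<m. if k = j then 1 - (\<Sum>i<n. P i j) else 0)"
        by (simp add: assoc_matching_def)
      also have "\<dots> = 1 - (\<Sum>i<n. P i j)" using L by (simp add: sum.delta)
      finally show ?thesis using L by (simp add: sum_agents' assoc_matching_def)
    next
      case R
      have "(\<Sum>k<n. assoc_matching n m P (Inl k) (Inr i)) = (\<Sum>k<n. if k = i then 1 - (\<Sum>j<m. P i j) else 0)"
        by (simp add: assoc_matching_def)
      also have "\<dots> = 1 - (\<Sum>j<m. P i j)" using R by (simp add: sum.delta)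
      finally show ?thesis using R by (simp add: sum_agents' assoc_matching_def)
    qed
  qed
  show ?thesis unfolding deterministic_matching_def bistochastic_def
    using e r c by force
qed

lemma ext_sum:
  assumes dec: "gen_decomposition n m p K lam Q"
    and a: "a \<in> agents' n m" and c: "c \<in> objects' n m"
  shows "assoc_matching n m p a c = (\<Sum>k<K. lam k * assoc_matching n m (Q k) a c)"
proof -
  have L1: "(\<Sum>k<K. lam k) = 1" and pe: "\<And>i j. i<n \<Longrightarrow> j<m \<Longrightarrow> p i j = (\<Sum>k<K. lam k * Q k i j)"
    using dec unfolding gen_decomposition_def by auto
  have rowe: "1 - (\<Sum>j<m. p i j) = (\<Sum>k<K. lam k * (1 - (\<Sum>j<m. Q k i j)))" if "i<n" for i
  proof -
    have "(\<Sum>j<m. p i j) = (\<Sum>j<m. \<Sum>k<K. lam k * Q k i j)" using pe that by simp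
    also have "\<dots> = (\<Sum>k<K. lam k * (\<Sum>j<m. Q k i j))" by (subst sum.swap) (simp add: sum_distrib_left)
    finally show ?thesis using L1 by (simp add: right_diff_distrib sum_subtractf)
  qed
  have cole: "1 - (\<Sum>i<n. p i j) = (\<Sum>k<K. lam k * (1 - (\<Sum>i<n. Q k i j)))" if "j<m" for j
  proof -
    have "(\<Sum>i<n. p i j) = (\<Sum>i<n. \<Sum>k<K. lam k * Q k i j)" using pe that by simp
    also have "\<dots> = (\<Sum>k<K. lam k * (\<Sum>i<n. Q k i j))" by (subst sum.swap) (simp add: sum_distrib_left)
    finally show ?thesis using L1 by (simp add: right_diff_distrib sum_subtractf)
  qed
  from a c consider (LL) i j where "a = Inl i" "c = Inl j" "i<n" "j<m"
    | (LR) i k where "a = Inl i" "c = Inr k" "i<n" "k<n"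
    | (RL) j k where "a = Inr j" "c = Inl k" "j<m" "k<m"
    | (RR) j i where "a = Inr j" "c = Inr i" "j<m" "i<n"
    by (auto simp: agents'_def objects'_def)
  then show ?thesis
  proof cases
    case LL then show ?thesis using pe by (simp add: assoc_matching_def)
  next
    case LR then show ?thesis using rowe by (simp add: assoc_matching_def)
  next
    case RL then show ?thesis using cole by (simp add: assoc_matching_def)
  next
    case RR then show ?thesis using pe by (simp add: assoc_matching_def)
  qed
qed


lemma lam_le1:
  fixes K t :: nat
  assumes "\<forall>k<K. 0 < (lam k::real)" "(\<Sum>k<K. lam k) = 1" "t < K"
  shows "lam t \<le> 1"
proof -
  have "lam t \<le> (\<Sum>k<K. lam k)" using assms by (intro member_le_sum) auto
  then show ?thesis using assms by simp
qed

lemma restr_decomp: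
  fixes K :: nat
  assumes H: "\<forall>k<K. 0 < lam k \<and> deterministic_matching (agents' n m) (objects' n m) (Q k)"
    and L: "(\<Sum>k<K. lam k) = 1"
    and E: "\<forall>a\<in>agents' n m. \<forall>c\<in>objects' n m. assoc_matching n m p a c = (\<Sum>k<K. lam k * Q k a c)"
  shows "gen_decomposition n m p K lam (\<lambda>k i j. Q k (Inl i) (Inl j))"
    and "gen_decomposition n m p K lam (\<lambda>k i j. Q k (Inr j) (Inr i))"
proof -
  have le1: "lam t \<le> 1" if "t<K" for t using lam_le1[of K lam t] H L that by auto
  have bi: "bistochastic (agents' n m) (objects' n m) (Q t)" and e01: "\<forall>a\<in>agents' n m. \<forall>c\<in>objects' n m. Q t a c \<in> {0,1}" if "t<K" for t
    using H that unfolding deterministic_matching_def by auto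
  have nn: "Q t a c \<ge> 0" if "t<K" "a\<in>agents' n m" "c\<in>objects' n m" for t a c
    using bi[OF that(1)] that unfolding bistochastic_def by auto
  have rowle: "(\<Sum>j<m. Q t a (Inl j)) \<le> 1" "(\<Sum>k<n. Q t a (Inr k)) \<le> 1" if "t<K" "a\<in>agents' n m" for t a
  proof -
    have s: "(\<Sum>j<m. Q t a (Inl j)) + (\<Sum>k<n. Q t a (Inr k)) = 1"
      using bi[OF that(1)] that(2) unfolding bistochastic_def by (simp add: sum_objects')
    have "(\<Sum>j<m. Q t a (Inl j)) \<ge> 0" "(\<Sum>k<n. Q t a (Inr k)) \<ge> 0"
      using nn[OF that] by (auto intro!: sum_nonneg simp: objects'_def)
    then show "(\<Sum>j<m. Q t a (Inl j)) \<le> 1" "(\<Sum>k<n. Q t a (Inr k)) \<le> 1" using s by linarith+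
  qed
  have colle: "(\<Sum>i<n. Q t (Inl i) c) \<le> 1" "(\<Sum>k<m. Q t (Inr k) c) \<le> 1" if "t<K" "c\<in>objects' n m" for t c
  proof -
    have s: "(\<Sum>i<n. Q t (Inl i) c) + (\<Sum>k<m. Q t (Inr k) c) = 1"
      using bi[OF that(1)] that(2) unfolding bistochastic_def by (simp add: sum_agents')
    have "(\<Sum>i<n. Q t (Inl i) c) \<ge> 0" "(\<Sum>k<m. Q t (Inr k) c) \<ge> 0"
      using nn[OF that(1) _ that(2)] by (auto intro!: sum_nonneg simp: agents'_def)
    then show "(\<Sum>i<n. Q t (Inl i) c) \<le> 1" "(\<Sum>k<m. Q t (Inr k) c) \<le> 1" using s by linarith+
  qed
  have A: "gen_deterministic n m (\<lambda>i j. Q t (Inl i) (Inl j))" if t: "t<K" for t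
    unfolding gen_deterministic_def gen_random_matching_def
    using nn[OF t] rowle(1)[OF t] colle(1)[OF t] e01[OF t]
    by (auto simp: agents'_def objects'_def)
  have B: "gen_deterministic n m (\<lambda>i j. Q t (Inr j) (Inr i))" if t: "t<K" for t
    unfolding gen_deterministic_def gen_random_matching_def
    using nn[OF t] rowle(2)[OF t] colle(2)[OF t] e01[OF t]
    by (auto simp: agents'_def objects'_def)
  have EA: "p i j = (\<Sum>k<K. lam k * Q k (Inl i) (Inl j))" if "i<n" "j<m" for i j
    using E[rule_format, of "Inl i" "Inl j"] that by (auto simp: agents'_def objects'_def assoc_matching_def)
  have EB: "p i j = (\<Sum>k<K. lam k * Q k (Inr j) (Inr i))" if "i<n" "j<m" for i j
    using E[rule_format, of "Inr j" "Inr i"] that by (auto simp: agents'_def objects'_def assoc_matching_def)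
  show "gen_decomposition n m p K lam (\<lambda>k i j. Q k (Inl i) (Inl j))"
    unfolding gen_decomposition_def using H le1 A L EA by blast
  show "gen_decomposition n m p K lam (\<lambda>k i j. Q k (Inr j) (Inr i))"
    unfolding gen_decomposition_def using H le1 B L EB by blast
qed

lemma zero_entry:
  fixes K :: nat
  assumes H: "\<forall>k<K. 0 < lam k \<and> deterministic_matching (agents' n m) (objects' n m) (Q k)"
    and E: "\<forall>a\<in>agents' n m. \<forall>c\<in>objects' n m. assoc_matching n m p a c = (\<Sum>k<K. lam k * Q k a c)"
    and t: "t<K" and a: "a\<in>agents' n m" and c: "c\<in>objects' n m" and z: "assoc_matching n m p a c = 0"
  shows "Q t a c = 0"
proof -
  have nn: "\<forall>k\<in>{..<K}. 0 \<le> lam k * Q k a c"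
    using H a c by (auto simp: deterministic_matching_def bistochastic_def)
  have "(\<Sum>k<K. lam k * Q k a c) = 0" using E a c z by auto
  then have "lam t * Q t a c = 0" using nn t by (subst (asm) sum_nonneg_eq_0_iff) auto
  then show ?thesis using H t by auto
qed


lemma ws_forward:
  assumes gi: "general_instance n m pA pO"
    and dm: "deterministic_matching (agents' n m) (objects' n m) q"
    and z1: "\<forall>i<n. \<forall>k<n. k \<noteq> i \<longrightarrow> q (Inl i) (Inr k) = 0"
    and z2: "\<forall>j<m. \<forall>k<m. k \<noteq> j \<longrightarrow> q (Inr j) (Inl k) = 0"
    and s1: "gen_weakly_stable n m pA pO (\<lambda>i j. q (Inl i) (Inl j))"
    and s2: "gen_weakly_stable n m pA pO (\<lambda>i j. q (Inr j) (Inr i))"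
  shows "weakly_stable (agents' n m) (objects' n m) (assocA n m pA pO) (assocO n m pA pO) q"
proof -
  have bi: "bistochastic (agents' n m) (objects' n m) q" using dm unfolding deterministic_matching_def by auto
  note RU = row_unique[OF bi fin_obj]
  note CU = col_unique[OF bi fin_ag]
  have inA: "Inl i \<in> agents' n m" "Inr j \<in> agents' n m" if "i<n" "j<m" for i j
    using that by (auto simp: agents'_def)
  have inB: "Inl j \<in> objects' n m" "Inr i \<in> objects' n m" if "i<n" "j<m" for i j
    using that by (auto simp: objects'_def)
  have n1: "n \<ge> 1" "m \<ge> 1" using gi unfolding general_instance_def by auto
  have IR1: "sp (pA i) (Some j) None \<and> sp (pO j) (Some i) None" if "i<n" "j<m" "q (Inl i) (Inl j) = 1" for i j
  proof -
    have "\<not> sp (pA i) None (Some j)" "\<not> sp (pO j) None (Some i)"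
      using s1 that unfolding gen_weakly_stable_def individually_rational_def by auto
    then show ?thesis using gi_facts(3,6)[OF gi, of i j] that by auto
  qed
  have IR2: "sp (pA i) (Some j) None \<and> sp (pO j) (Some i) None" if "i<n" "j<m" "q (Inr j) (Inr i) = 1" for i j
  proof -
    have "\<not> sp (pA i) None (Some j)" "\<not> sp (pO j) None (Some i)"
      using s2 that unfolding gen_weakly_stable_def individually_rational_def by auto
    then show ?thesis using gi_facts(3,6)[OF gi, of i j] that by auto
  qed
  show ?thesis unfolding weakly_stable_def
  proof
    assume "\<exists>a\<in>agents' n m. \<exists>b\<in>agents' n m. \<exists>c\<in>objects' n m. \<exists>c'\<in>objects' n m.
        q a c' = 1 \<and> q b c = 1 \<and> sp (assocA n m pA pO a) c c' \<and> sp (assocO n m pA pO c) a b"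
    then obtain a b c c' where a: "a \<in> agents' n m" and b: "b \<in> agents' n m"
      and c: "c \<in> objects' n m" and c': "c' \<in> objects' n m"
      and qac: "q a c' = 1" and qbc: "q b c = 1"
      and spA: "sp (assocA n m pA pO a) c c'" and spO: "sp (assocO n m pA pO c) a b" by blast
    from a c show False
    proof (auto simp: agents'_def objects'_def)
      fix i j assume i: "i<n" and j: "j<m" and [simp]: "a = Inl i" "c = Inl j"
      have acc1: "sp (pA i) (Some j) None \<and> (\<forall>j'<m. pA i (Some j') (Some j) \<longrightarrow> q (Inl i) (Inl j') = 0)"
      proof -
        from c' consider (L) j' where "c' = Inl j'" "j'<m" | (R) k where "c' = Inr k" "k<n" by (auto simp: objects'_def)
        then show ?thesis
        proof cases
          case L
          have ir: "sp (pA i) (Some j') None" using IR1[OF i L(2)] qac L by auto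
          have h: "sp (pA i) (Some j) None \<and> pA i (Some j) (Some j') \<and> \<not> pA i (Some j') (Some j)"
            using spA ir L by (auto simp: assocA_def rank_rel_def sp_def split: if_splits)
          have "q (Inl i) (Inl j'') = 0" if "j''<m" "pA i (Some j'') (Some j)" for j''
          proof -
            have "j'' \<noteq> j'" using h that by auto
            then show ?thesis using RU[OF inA(1)[OF i j] inB(1)[OF i L(2)] inB(1)[OF i that(1)]] qac L by auto
          qed
          then show ?thesis using h by auto
        next
          case R
          have "k = i" using z1 qac R i by force
          then have h: "sp (pA i) (Some j) None"
            using spA R by (auto simp: assocA_def rank_rel_def sp_def split: if_splits)
          have "q (Inl i) (Inl j'') = 0" if "j''<m" for j''
            using RU[OF inA(1)[OF i j] inB(2)[OF i j] inB(1)[OF i that]] qac R \<open>k = i\<close> by auto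
          then show ?thesis using h by auto
        qed
      qed
      have acc2: "sp (pO j) (Some i) None \<and> (\<forall>i'<n. pO j (Some i') (Some i) \<longrightarrow> q (Inl i') (Inl j) = 0)"
      proof -
        from b consider (L) i' where "b = Inl i'" "i'<n" | (R) k where "b = Inr k" "k<m" by (auto simp: agents'_def)
        then show ?thesis
        proof cases
          case L
          have ir: "sp (pO j) (Some i') None" using IR1[OF L(2) j] qbc L by auto
          have h: "sp (pO j) (Some i) None \<and> pO j (Some i) (Some i') \<and> \<not> pO j (Some i') (Some i)"
            using spO ir L by (auto simp: assocO_def rank_rel_def sp_def split: if_splits)
          have "q (Inl i'') (Inl j) = 0" if "i''<n" "pO j (Some i'') (Some i)" for i''
          proof -
            have "i'' \<noteq> i'" using h that by auto
            then show ?thesis using CU[OF inA(1)[OF L(2) j] inB(1)[OF i j] inA(1)[OF that(1) j]] qbc L by auto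
          qed
          then show ?thesis using h by auto
        next
          case R
          have "k = j" using z2 qbc R j by force
          then have h: "sp (pO j) (Some i) None"
            using spO R by (auto simp: assocO_def rank_rel_def sp_def split: if_splits)
          have "q (Inl i'') (Inl j) = 0" if "i''<n" for i''
            using CU[OF inA(2)[OF i j] inB(1)[OF i j] inA(1)[OF that j]] qbc R \<open>k = j\<close> by auto
          then show ?thesis using h by auto
        qed
      qed
      have "acceptable pA pO i j" using acc1 acc2 unfolding acceptable_def by auto
      moreover have "(\<Sum>j' | j' < m \<and> pA i (Some j') (Some j). q (Inl i) (Inl j')) = 0"
        using acc1 by (intro sum.neutral) auto
      moreover have "(\<Sum>i' | i' < n \<and> pO j (Some i') (Some i). q (Inl i') (Inl j)) = 0"
        using acc2 by (intro sum.neutral) auto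
      ultimately show False using s1 i j unfolding gen_weakly_stable_def by blast
    next
      fix i k assume i: "i<n" and k: "k<n" and [simp]: "a = Inl i" "c = Inr k"
      from c' consider (L) j' where "c' = Inl j'" "j'<m" | (R) k' where "c' = Inr k'" "k'<n" by (auto simp: objects'_def)
      then show False
      proof cases
        case L
        have ir: "sp (pA i) (Some j') None" using IR1[OF i L(2)] qac L by auto
        then show False using spA L by (auto simp: assocA_def rank_rel_def sp_def split: if_splits)
      next
        case R
        have "k' = i" using z1 qac R i by force
        then show False using spA R by (auto simp: assocA_def rank_rel_def sp_def split: if_splits)
      qed
    next
      fix j j' assume j: "j<m" and j': "j'<m" and [simp]: "a = Inr j" "c = Inl j'"
      from b consider (L) i' where "b = Inl i'" "i'<n" | (R) k where "b = Inr k" "k<m" by (auto simp: agents'_def)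
      then show False
      proof cases
        case L
        have ir: "sp (pO j') (Some i') None" using IR1[OF L(2) j'] qbc L by auto
        then show False using spO L by (auto simp: assocO_def rank_rel_def sp_def split: if_splits)
      next
        case R
        have "k = j'" using z2 qbc R j' by force
        then show False using spO R by (auto simp: assocO_def rank_rel_def sp_def split: if_splits)
      qed
    next
      fix j i assume j: "j<m" and i: "i<n" and [simp]: "a = Inr j" "c = Inr i"
      obtain k where k: "k<n" "c' = Inr k" "pO j (Some i) (Some k)" "\<not> pO j (Some k) (Some i)"
      proof -
        from c' consider (L) j' where "c' = Inl j'" "j'<m" | (R) k where "c' = Inr k" "k<n" by (auto simp: objects'_def)
        then show ?thesis
        proof cases
          case L
          have "j' = j" using z2 qac L j by force
          then show ?thesis using spA L by (auto simp: assocA_def rank_rel_def sp_def split: if_splits)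
        next
          case R
          then show ?thesis using spA that by (auto simp: assocA_def rank_rel_def sp_def split: if_splits)
        qed
      qed
      obtain l where l: "l<m" "b = Inr l" "pA i (Some j) (Some l)" "\<not> pA i (Some l) (Some j)"
      proof -
        from b consider (L) i' where "b = Inl i'" "i'<n" | (R) l where "b = Inr l" "l<m" by (auto simp: agents'_def)
        then show ?thesis
        proof cases
          case L
          have "i' = i" using z1 qbc L i by force
          then show ?thesis using spO L by (auto simp: assocO_def rank_rel_def sp_def split: if_splits)
        next
          case R
          then show ?thesis using spO that by (auto simp: assocO_def rank_rel_def sp_def split: if_splits)
        qed
      qed
      have qjk: "q (Inr j) (Inr k) = 1" using qac k by simp
      have qli: "q (Inr l) (Inr i) = 1" using qbc l by simp
      have irl: "sp (pA i) (Some l) None" using IR2[OF i l(1) qli] by auto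
      have irk: "sp (pO j) (Some k) None" using IR2[OF k(1) j qjk] by auto
      have dA: "Some j \<in> insert None (Some ` {..<m})" "Some l \<in> insert None (Some ` {..<m})" "None \<in> insert None (Some ` {..<m})"
        using j l by auto
      have dO: "Some i \<in> insert None (Some ` {..<n})" "Some k \<in> insert None (Some ` {..<n})" "None \<in> insert None (Some ` {..<n})"
        using i k by auto
      have a1: "pA i (Some j) None" using gi_facts(2)[OF gi i dA(1,2,3)] l irl unfolding sp_def by blast
      have a2: "\<not> pA i None (Some j)" using gi_facts(2)[OF gi i dA(3,1,2)] l irl unfolding sp_def by blast
      have o1: "pO j (Some i) None" using gi_facts(5)[OF gi j dO(1,2,3)] k irk unfolding sp_def by blast
      have o2: "\<not> pO j None (Some i)" using gi_facts(5)[OF gi j dO(3,1,2)] k irk unfolding sp_def by blast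
      have "acceptable pA pO i j" using a1 a2 o1 o2 unfolding acceptable_def sp_def by auto
      moreover have "(\<Sum>j' | j' < m \<and> pA i (Some j') (Some j). q (Inr j') (Inr i)) = 0"
      proof (intro sum.neutral ballI)
        fix j'' assume "j'' \<in> {j'. j' < m \<and> pA i (Some j') (Some j)}"
        then have "j'' < m" "j'' \<noteq> l" using l by auto
        then show "q (Inr j'') (Inr i) = 0"
          using CU[OF inA(2)[OF i l(1)] inB(2)[OF i j] inA(2)[OF i \<open>j''<m\<close>]] qli by auto
      qed
      moreover have "(\<Sum>i' | i' < n \<and> pO j (Some i') (Some i). q (Inr j) (Inr i')) = 0"
      proof (intro sum.neutral ballI)
        fix i'' assume "i'' \<in> {i'. i' < n \<and> pO j (Some i') (Some i)}"
        then have "i'' < n" "i'' \<noteq> k" using k by auto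
        then show "q (Inr j) (Inr i'') = 0"
          using RU[OF inA(2)[OF i j] inB(2)[OF k(1) j] inB(2)[OF \<open>i''<n\<close> j]] qjk by auto
      qed
      ultimately show False using s2 i j unfolding gen_weakly_stable_def by blast
    qed
  qed
qed


theorem proposition27:
  fixes n m :: nat
    and pA pO :: "nat \<Rightarrow> nat option \<Rightarrow> nat option \<Rightarrow> bool"
    and p :: "nat \<Rightarrow> nat \<Rightarrow> real"
  assumes "general_instance n m pA pO"
    and "gen_random_matching n m p"
  shows "gen_robust_ex_post_ws n m pA pO p \<longleftrightarrow>
           (robust_ex_post_ws (agents' n m) (objects' n m) (assocA n m pA pO) (assocO n m pA pO)
              (assoc_matching n m p)
            \<and> non_wasteful n m pA pO p)"
proof
  assume G: "gen_robust_ex_post_ws n m pA pO p"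
  have NW: "non_wasteful n m pA pO p" using G unfolding gen_robust_ex_post_ws_def by auto
  have GS: "\<And>K lam Q. gen_decomposition n m p K lam Q \<Longrightarrow> \<forall>k<K. gen_weakly_stable n m pA pO (Q k)"
    using G unfolding gen_robust_ex_post_ws_def by blast
  have "robust_ex_post_ws (agents' n m) (objects' n m) (assocA n m pA pO) (assocO n m pA pO) (assoc_matching n m p)"
    unfolding robust_ex_post_ws_def
  proof (intro allI impI)
    fix K :: nat and lam :: "nat \<Rightarrow> real" and Q t
    assume HH: "(\<forall>k<K. 0 < lam k \<and> deterministic_matching (agents' n m) (objects' n m) (Q k)) \<and>
         (\<Sum>k<K. lam k) = 1 \<and>
         (\<forall>a\<in>agents' n m. \<forall>c\<in>objects' n m. assoc_matching n m p a c = (\<Sum>k<K. lam k * Q k a c))"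
      and t: "t < K"
    have H: "\<forall>k<K. 0 < lam k \<and> deterministic_matching (agents' n m) (objects' n m) (Q k)"
      and L: "(\<Sum>k<K. lam k) = 1"
      and E: "\<forall>a\<in>agents' n m. \<forall>c\<in>objects' n m. assoc_matching n m p a c = (\<Sum>k<K. lam k * Q k a c)"
      using HH by auto
    have s1: "gen_weakly_stable n m pA pO (\<lambda>i j. Q t (Inl i) (Inl j))"
      using GS[OF restr_decomp(1)[OF H L E]] t by auto
    have s2: "gen_weakly_stable n m pA pO (\<lambda>i j. Q t (Inr j) (Inr i))"
      using GS[OF restr_decomp(2)[OF H L E]] t by auto
    have z1: "\<forall>i<n. \<forall>k<n. k \<noteq> i \<longrightarrow> Q t (Inl i) (Inr k) = 0"
    proof (intro allI impI)
      fix i k assume "i<n" "k<n" "k \<noteq> i"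
      then show "Q t (Inl i) (Inr k) = 0"
        by (intro zero_entry[OF H E t]) (auto simp: agents'_def objects'_def assoc_matching_def)
    qed
    have z2: "\<forall>j<m. \<forall>k<m. k \<noteq> j \<longrightarrow> Q t (Inr j) (Inl k) = 0"
    proof (intro allI impI)
      fix j k assume "j<m" "k<m" "k \<noteq> j"
      then show "Q t (Inr j) (Inl k) = 0"
        by (intro zero_entry[OF H E t]) (auto simp: agents'_def objects'_def assoc_matching_def)
    qed
    show "weakly_stable (agents' n m) (objects' n m) (assocA n m pA pO) (assocO n m pA pO) (Q t)"
      using ws_forward[OF assms(1) _ z1 z2 s1 s2] H t by auto
  qed
  then show "robust_ex_post_ws (agents' n m) (objects' n m) (assocA n m pA pO) (assocO n m pA pO)
              (assoc_matching n m p) \<and> non_wasteful n m pA pO p" using NW by auto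
next
  assume RN: "robust_ex_post_ws (agents' n m) (objects' n m) (assocA n m pA pO) (assocO n m pA pO)
              (assoc_matching n m p) \<and> non_wasteful n m pA pO p"
  show "gen_robust_ex_post_ws n m pA pO p"
    unfolding gen_robust_ex_post_ws_def
  proof (intro conjI allI impI)
    show "non_wasteful n m pA pO p" using RN by auto
  next
    fix K lam Q t
    assume dec: "gen_decomposition n m p K lam Q" and t: "t < K"
    have H: "\<forall>k<K. 0 < lam k \<and> deterministic_matching (agents' n m) (objects' n m) (assoc_matching n m (Q k))"
      using dec ext_det unfolding gen_decomposition_def by auto
    have L: "(\<Sum>k<K. lam k) = 1" using dec unfolding gen_decomposition_def by auto
    have E: "\<forall>a\<in>agents' n m. \<forall>c\<in>objects' n m. assoc_matching n m p a c = (\<Sum>k<K. lam k * assoc_matching n m (Q k) a c)"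
      using ext_sum[OF dec] by auto
    have "weakly_stable (agents' n m) (objects' n m) (assocA n m pA pO) (assocO n m pA pO) (assoc_matching n m (Q t))"
    proof -
      have "\<forall>K (lam :: nat \<Rightarrow> real) Q.
        ((\<forall>k<K. 0 < lam k \<and> deterministic_matching (agents' n m) (objects' n m) (Q k)) \<and>
         (\<Sum>k<K. lam k) = 1 \<and>
         (\<forall>a\<in>agents' n m. \<forall>c\<in>objects' n m. assoc_matching n m p a c = (\<Sum>k<K. lam k * Q k a c)))
        \<longrightarrow> (\<forall>k<K. weakly_stable (agents' n m) (objects' n m) (assocA n m pA pO) (assocO n m pA pO) (Q k))"
        using RN unfolding robust_ex_post_ws_def by blast
      from this[rule_format, OF conjI[OF H conjI[OF L E]] t] show ?thesis .
    qed
    then show "gen_weakly_stable n m pA pO (Q t)"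
      using ws_back[OF assms(1)] dec t unfolding gen_decomposition_def by auto
  qed
qed

end
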